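(* Let $q$ be a prime power, $m>2$, $n\ge1$, and let $\mathscr{C}\subseteq\mathrm{GF}(q^m)^n$ be a scalable code. Let $f:\mathrm{GF}(q^m)^n\times\mathrm{GF}(q^m)^n\to\mathrm{GF}(q^m)$ be a biadditive form and $\tilde f$ the biadditive form on $\mathrm{GF}(q)^{mn}$ induced by $f$. Suppose $\mathrm{Im}_{\mathscr{B}}(\mathscr{C})$ is self-orthogonal w.r.t. $\tilde f$ for five bases $\mathscr{B}_1,\ldots,\mathscr{B}_5$ of $\mathrm{GF}(q^m)$ over $\mathrm{GF}(q)$ whose dual bases are $\mathscr{B}_1'=\{\beta_1,\ldots,\beta_m\}$, $\mathscr{B}_2'=\{\beta_1+\alpha\beta_2,\beta_2,\ldots,\beta_m\}$, $\mathscr{B}_3'=\{\beta_1+\gamma\beta_3,\beta_2,\ldots,\beta_m\}$, $\mathscr{B}_4'=\{\beta_1,\beta_2+\delta\beta_3,\beta_3,\ldots,\beta_m\}$ and $\mathscr{B}_5'=\{\beta_1+\alpha\beta_2+\gamma\beta_3,\beta_2,\ldots,\beta_m\}$, where $\alpha,\gamma,\delta$ are nonzero (not necessarily distinct) elements of $\mathrm{GF}(q)$. Then $\mathrm{Tr}(\mathscr{C})$ is self-orthogonal w.r.t. $f$ (restricted to $\mathrm{GF}(q)^n\times\mathrm{GF}(q)^n$), and $\mathrm{Im}_{\mathscr{B}}(\mathscr{C})$ is self-orthogonal w.r.t. $\tilde f$ for every basis $\mathscr{B}$ of $\mathrm{GF}(q^m)$ over $\mathrm{GF}(q)$.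
   Context: $\mathrm{Tr}:\mathrm{GF}(q^m)\to\mathrm{GF}(q)$, $\mathrm{Tr}(a)=\sum_{i=0}^{m-1}a^{q^i}$. The dual basis of a basis $\{\gamma_1,\ldots,\gamma_m\}$ of $\mathrm{GF}(q^m)$ over $\mathrm{GF}(q)$ is the unique basis $\{\beta_1,\ldots,\beta_m\}$ with $\mathrm{Tr}(\gamma_i\beta_j)=\delta_{ij}$. A code $\mathscr{C}\subseteq\mathrm{GF}(q^m)^n$ is scalable if $x\in\mathscr{C}\Rightarrow\alpha x\in\mathscr{C}$ for all $\alpha\in\mathrm{GF}(q^m)$. A biadditive form is additive in each argument. For a basis $\mathscr{B}$ with dual basis $\{\beta_1,\ldots,\beta_m\}$, $\mathrm{Im}_{\mathscr{B}}(\mathscr{C})=\{(\mathrm{Tr}(\beta_1x_1),\ldots,\mathrm{Tr}(\beta_1x_n),\ldots,\mathrm{Tr}(\beta_mx_1),\ldots,\mathrm{Tr}(\beta_mx_n)):x\in\mathscr{C}\}\subseteq\mathrm{GF}(q)^{mn}$, and $\mathrm{Tr}(\mathscr{C})=\{(\mathrm{Tr}(x_1),\ldots,\mathrm{Tr}(x_n)):x\in\mathscr{C}\}$. The induced form is $\tilde f(x,y)=\sum_{i=0}^{m-1}f((x_{in+1},\ldots,x_{in+n}),(y_{in+1},\ldots,y_{in+n}))$ for $x,y\in\mathrm{GF}(q)^{mn}$. A code $D$ is self-orthogonal w.r.t. a form $g$ if $g(x,y)=0$ for all $x,y\in D$. *)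

theory Defs
  imports "HOL-Computational_Algebra.Primes"
begin

text \<open>Setting: a finite field type 'F of cardinality q^m plays the role of GF(q^m);
GF(q) is its unique subfield of order q, namely the set of roots of X^q - X.
Vectors of GF(q^m)^n (and GF(q)^(mn)) are lists of the appropriate length.\<close>

definition prime_power :: "nat \<Rightarrow> bool" where
  "prime_power q \<longleftrightarrow> (\<exists>p k. prime p \<and> k > 0 \<and> q = p ^ k)"

definition subfield_GF :: "nat \<Rightarrow> 'F::{finite,field} set" where
  "subfield_GF q = {x. x ^ q = x}"

definition trace_GF :: "nat \<Rightarrow> nat \<Rightarrow> 'F::{finite,field} \<Rightarrow> 'F" where
  "trace_GF q m a = (\<Sum>i<m. a ^ (q ^ i))"

definition is_basis :: "nat \<Rightarrow> nat \<Rightarrow> 'F::{finite,field} list \<Rightarrow> bool" where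
  "is_basis q m B \<longleftrightarrow> length B = m \<and>
     (\<forall>x::'F. \<exists>!c::nat \<Rightarrow> 'F. (\<forall>i<m. c i \<in> subfield_GF q) \<and> (\<forall>i\<ge>m. c i = 0)
                 \<and> x = (\<Sum>i<m. c i * B ! i))"

definition is_dual :: "nat \<Rightarrow> nat \<Rightarrow> 'F::{finite,field} list \<Rightarrow> 'F list \<Rightarrow> bool" where
  "is_dual q m B B' \<longleftrightarrow> length B' = m \<and>
     (\<forall>i<m. \<forall>j<m. trace_GF q m (B ! i * B' ! j) = (if i = j then 1 else 0))"

definition dual_basis :: "nat \<Rightarrow> nat \<Rightarrow> 'F::{finite,field} list \<Rightarrow> 'F list" where
  "dual_basis q m B = (THE B'. is_basis q m B' \<and> is_dual q m B B')"

definition scalable :: "'F::field list set \<Rightarrow> bool" where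
  "scalable C \<longleftrightarrow> (\<forall>x\<in>C. \<forall>a. map (\<lambda>xi. a * xi) x \<in> C)"

definition biadditive :: "nat \<Rightarrow> ('a::ab_group_add list \<Rightarrow> 'a list \<Rightarrow> 'a) \<Rightarrow> bool" where
  "biadditive n f \<longleftrightarrow>
     (\<forall>x y z. length x = n \<longrightarrow> length y = n \<longrightarrow> length z = n \<longrightarrow>
        f (map2 (+) x y) z = f x z + f y z \<and> f x (map2 (+) y z) = f x y + f x z)"

text \<open>Im_B(C), with B' the dual basis of B:
  (Tr(b1 x1),...,Tr(b1 xn),...,Tr(bm x1),...,Tr(bm xn)).\<close>
definition im_dual :: "nat \<Rightarrow> nat \<Rightarrow> 'F::{finite,field} list \<Rightarrow> 'F list set \<Rightarrow> 'F list set" where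
  "im_dual q m B' C = (\<lambda>x. concat (map (\<lambda>b. map (\<lambda>xj. trace_GF q m (b * xj)) x) B')) ` C"

definition im_basis :: "nat \<Rightarrow> nat \<Rightarrow> 'F::{finite,field} list \<Rightarrow> 'F list set \<Rightarrow> 'F list set" where
  "im_basis q m B C = im_dual q m (dual_basis q m B) C"

definition trace_code :: "nat \<Rightarrow> nat \<Rightarrow> 'F::{finite,field} list set \<Rightarrow> 'F list set" where
  "trace_code q m C = map (trace_GF q m) ` C"

definition induced_form :: "nat \<Rightarrow> nat \<Rightarrow> ('a list \<Rightarrow> 'a list \<Rightarrow> 'b::comm_monoid_add)
    \<Rightarrow> 'a list \<Rightarrow> 'a list \<Rightarrow> 'b" where
  "induced_form m n f x y = (\<Sum>i<m. f (take n (drop (i*n) x)) (take n (drop (i*n) y)))"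

definition self_orthogonal :: "('a \<Rightarrow> 'a \<Rightarrow> 'b::zero) \<Rightarrow> 'a set \<Rightarrow> bool" where
  "self_orthogonal g D \<longleftrightarrow> (\<forall>x\<in>D. \<forall>y\<in>D. g x y = 0)"

end

theory Submission
  imports Defs "HOL-Number_Theory.Residues" "HOL-Computational_Algebra.Polynomial" "HOL-Library.FuncSet"
begin


lemma char_q:
  assumes q: "prime_power q" and card: "card (UNIV::'F::{finite,field} set) = q^m" and m: "m > 0"
  shows "\<exists>k. q = CHAR('F)^k" and "prime CHAR('F)" and "q \<ge> 2"
proof -
  obtain p k where p: "prime p" "k > 0" "q = p^k" using q unfolding prime_power_def by blast
  have pc: "prime CHAR('F)" by (intro prime_CHAR_semidom finite_imp_CHAR_pos) simp
  have "CHAR('F) dvd p^(k*m)" using CHAR_dvd_CARD[where 'a='F] card p by (simp add: power_mult)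
  then have "CHAR('F) dvd p" using pc prime_dvd_power by blast
  then have "CHAR('F) = p" using pc p by (simp add: primes_dvd_imp_eq)
  then show "\<exists>k. q = CHAR('F)^k" using p by blast
  show "prime CHAR('F)" by fact
  have "p \<ge> 2" using p prime_ge_2_nat by blast
  then have "p^1 \<le> p^k" using p by (intro power_increasing) auto
  then show "q \<ge> 2" using p \<open>p \<ge> 2\<close> by simp
qed

lemma pow_card_same:
  fixes x :: "'F::{finite,field}"
  shows "x ^ card (UNIV :: 'F set) = x"
proof (cases "x = 0")
  case False
  have "x * (\<Prod>y\<in>UNIV-{0}. x * y) = x * x ^ (card (UNIV :: 'F set) - 1) * \<Prod>(UNIV-{0})"
    by (simp add: prod.distrib mult_ac)
  also have "x * x ^ (card (UNIV :: 'F set) - 1) = x ^ Suc (card (UNIV :: 'F set) - 1)"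
    by (subst power_Suc) auto
  also have "Suc (card (UNIV :: 'F set) - 1) = card (UNIV :: 'F set)"
    using finite_UNIV_card_ge_0[where ?'a = 'F] by simp
  also have "(\<Prod>y\<in>UNIV-{0}. x * y) = (\<Prod>y\<in>UNIV-{0}. y)"
    by (rule prod.reindex_bij_witness[of _ "\<lambda>y. y / x" "\<lambda>y. x * y"]) (use False in auto)
  finally show ?thesis
    by simp
qed (use finite_UNIV_card_ge_0[where ?'a = 'F] in auto)

locale ffq =
  fixes q m :: nat and ty :: "'F::{finite,field} itself"
  assumes q: "prime_power q" and card: "card (UNIV::'F set) = q^m" and m: "m > 0"
begin

abbreviation Tr :: "'F \<Rightarrow> 'F" where "Tr \<equiv> trace_GF q m"
abbreviation GF :: "'F set" where "GF \<equiv> subfield_GF q"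

lemma q2: "q \<ge> 2" using char_q[OF q card m] by blast

lemma frob_add: "((x::'F) + y) ^ (q^i) = x^(q^i) + y^(q^i)"
proof -
  obtain k where k: "q = CHAR('F)^k" using char_q[OF q card m] by blast
  show ?thesis
    by (rule freshmans_dream'[OF char_q(2)[OF q card m]]) (simp add: k power_mult[symmetric])
qed

lemma frob_sum: "(sum (g::'a \<Rightarrow> 'F) A) ^ (q^i) = (\<Sum>a\<in>A. g a ^ (q^i))"
proof -
  obtain k where k: "q = CHAR('F)^k" using char_q[OF q card m] by blast
  show ?thesis
    by (rule freshmans_dream_sum'[OF char_q(2)[OF q card m]]) (simp add: k power_mult[symmetric])
qed

lemma pow_qm: "(x::'F) ^ (q^m) = x" using pow_card_same[of x] card by simp

lemma tr_add: "Tr (x + y) = Tr x + Tr y"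
  unfolding trace_GF_def by (simp add: frob_add sum.distrib)

lemma tr_zero: "Tr 0 = 0"
  unfolding trace_GF_def using q2 by (simp add: zero_power)

lemma tr_minus: "Tr (x - y) = Tr x - Tr y"
  using tr_add[of "x - y" y] by (simp add: algebra_simps)

lemma tr_sum: "Tr (sum g A) = (\<Sum>a\<in>A. Tr (g a))"
  unfolding trace_GF_def by (simp add: frob_sum sum.swap[of _ A])

lemma gf_pow: "c \<in> GF \<Longrightarrow> c ^ (q^i) = c"
proof (induction i)
  case (Suc i)
  have "c ^ (q ^ Suc i) = (c^(q^i))^q" by (simp add: power_mult[symmetric] mult.commute)
  then show ?case using Suc by (simp add: subfield_GF_def)
qed simp

lemma tr_scal: "c \<in> GF \<Longrightarrow> Tr (c * x) = c * Tr x"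
  unfolding trace_GF_def by (simp add: power_mult_distrib gf_pow sum_distrib_left)

lemma tr_in: "Tr x \<in> GF"
proof -
  have "Tr x ^ q = (\<Sum>i<m. x ^ (q^i)) ^ (q^1)" unfolding trace_GF_def by simp
  also have "\<dots> = (\<Sum>i<m. (x ^ (q^i))^(q^1))" by (rule frob_sum)
  also have "\<dots> = (\<Sum>i<m. x ^ (q^Suc i))" by (simp add: power_mult[symmetric] mult.commute)
  also have "\<dots> = (\<Sum>i<m. x ^ (q^i))"
  proof -
    obtain m' where m': "m = Suc m'" using m by (cases m) auto
    have "(\<Sum>i<m. x ^ (q^Suc i)) = (\<Sum>i<m'. x ^ (q^Suc i)) + x ^ (q^m)" using m' by simp
    also have "\<dots> = (\<Sum>i<m'. x ^ (q^Suc i)) + x ^ (q^0)" using pow_qm by simp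
    also have "\<dots> = (\<Sum>i<m. x ^ (q^i))" unfolding m' sum.lessThan_Suc_shift by simp
    finally show ?thesis .
  qed
  finally show ?thesis unfolding subfield_GF_def trace_GF_def by simp
qed

lemma gf_0: "0 \<in> GF" and gf_1: "1 \<in> GF"
  unfolding subfield_GF_def using q2 by auto

lemma tr_lincomb:
  assumes "\<forall>j\<in>A. c j \<in> GF"
  shows "Tr (\<Sum>j\<in>A. c j * w j) = (\<Sum>j\<in>A. c j * Tr (w j))"
  using assms by (simp add: tr_sum tr_scal)

lemma tr_nonzero: "\<exists>z. Tr z \<noteq> 0"
proof (rule ccontr)
  assume H: "\<not> (\<exists>z. Tr z \<noteq> 0)"
  define P :: "'F poly" where "P = (\<Sum>i<m. monom 1 (q^i))"
  have pP: "poly P x = Tr x" for x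
    unfolding P_def trace_GF_def by (simp add: poly_sum poly_monom)
  have "coeff P 1 = (\<Sum>i<m. coeff (monom (1::'F) (q^i)) 1)"
    unfolding P_def by (simp add: coeff_sum)
  also have "\<dots> = (\<Sum>i\<in>{0}. coeff (monom (1::'F) (q^i)) 1)"
  proof (rule sum.mono_neutral_right)
    show "\<forall>i\<in>{..<m} - {0}. coeff (monom (1::'F) (q ^ i)) 1 = 0"
    proof
      fix i assume "i \<in> {..<m} - {0}"
      then have "q^i \<noteq> 1" using q2 by simp
      then show "coeff (monom (1::'F) (q ^ i)) 1 = 0" by (simp add: coeff_monom)
    qed
  qed (use m in auto)
  also have "\<dots> = 1" by simp
  finally have "P \<noteq> 0" by auto
  then have "card {x. poly P x = 0} \<le> degree P" by (rule card_poly_roots_bound)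
  also have "degree P \<le> q^(m-1)"
    unfolding P_def
  proof (rule degree_sum_le)
    fix i assume "i \<in> {..<m}"
    then have "q^i \<le> q^(m-1)" using q2 by (intro power_increasing) auto
    then show "degree (monom (1::'F) (q^i)) \<le> q^(m-1)" by (simp add: degree_monom_eq)
  qed simp
  also have "q^(m-1) < q^m" using q2 m by (intro power_strict_increasing) auto
  also have "q^m = card {x. poly P x = 0}" using H card by (simp add: pP)
  finally show False by simp
qed

lemma card_GF: "card GF \<le> q"
proof -
  define P :: "'F poly" where "P = monom 1 q - monom 1 1"
  have pP: "poly P x = x^q - x" for x unfolding P_def by (simp add: poly_monom)
  have "coeff P q = 1" unfolding P_def using q2 by (simp add: coeff_monom)
  then have "P \<noteq> 0" by auto
  have "GF = {x. poly P x = 0}" by (simp add: pP subfield_GF_def)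
  also have "card \<dots> \<le> degree P" by (rule card_poly_roots_bound) fact
  also have "degree P \<le> q" unfolding P_def using q2
    by (intro degree_diff_le) (auto simp: degree_monom_eq)
  finally show ?thesis .
qed

lemma nondeg:
  fixes B :: "'F list"
  assumes B: "is_basis q m B" and z: "\<forall>i<m. Tr (B!i * z) = 0"
  shows "z = 0"
proof (rule ccontr)
  assume "z \<noteq> 0"
  obtain z0 where z0: "Tr z0 \<noteq> 0" using tr_nonzero by blast
  obtain c where c: "\<forall>i<m. c i \<in> GF" "z0 / z = (\<Sum>i<m. c i * B ! i)"
    using B unfolding is_basis_def by blast
  have "z0 = (z0 / z) * z" using \<open>z \<noteq> 0\<close> by simp
  also have "\<dots> = (\<Sum>i<m. c i * (B ! i * z))" unfolding c(2) by (simp add: sum_distrib_right mult.assoc)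
  finally have "Tr z0 = (\<Sum>i<m. c i * Tr (B ! i * z))" using c(1) by (simp add: tr_lincomb)
  also have "\<dots> = 0" using z by simp
  finally show False using z0 by simp
qed

definition Phi :: "'F list \<Rightarrow> 'F \<Rightarrow> nat \<Rightarrow> 'F" where
  "Phi B z = (\<lambda>i. if i < m then Tr (B!i * z) else 0)"

lemma Phi_inj: fixes B :: "'F list" assumes "is_basis q m B" shows "inj (Phi B)"
proof (rule injI)
  fix z1 z2 assume H: "Phi B z1 = Phi B z2"
  have "\<forall>i<m. Tr (B!i * (z1 - z2)) = 0"
  proof (intro allI impI)
    fix i assume "i < m"
    then have "Tr (B!i * z1) = Tr (B!i * z2)" using fun_cong[OF H, of i] by (simp add: Phi_def)
    then show "Tr (B!i * (z1 - z2)) = 0" by (simp add: right_diff_distrib tr_minus)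
  qed
  then have "z1 - z2 = 0" by (rule nondeg[OF assms])
  then show "z1 = z2" by simp
qed

definition Xset :: "(nat \<Rightarrow> 'F) set" where
  "Xset = {c. (\<forall>i<m. c i \<in> GF) \<and> (\<forall>i\<ge>m. c i = 0)}"

lemma Xset_card: "finite Xset \<and> card Xset \<le> q^m"
proof -
  define g where "g = (\<lambda>c::nat\<Rightarrow>'F. (\<lambda>i. if i < m then c i else 0))"
  have sub: "Xset \<subseteq> g ` (PiE {..<m} (\<lambda>_. GF))"
  proof
    fix c assume "c \<in> Xset"
    then have "c = g (restrict c {..<m})" "restrict c {..<m} \<in> PiE {..<m} (\<lambda>_. GF)"
      unfolding Xset_def g_def by (auto simp: fun_eq_iff)
    then show "c \<in> g ` (PiE {..<m} (\<lambda>_. GF))" by blast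
  qed
  have fin: "finite (PiE {..<m} (\<lambda>_. GF))" by (intro finite_PiE) auto
  have "card Xset \<le> card (g ` (PiE {..<m} (\<lambda>_. GF)))" by (intro card_mono finite_imageI fin sub)
  also have "\<dots> \<le> card (PiE {..<m} (\<lambda>_. GF))" by (rule card_image_le[OF fin])
  also have "\<dots> = card GF ^ m" by (simp add: card_PiE)
  also have "\<dots> \<le> q^m" by (intro power_mono card_GF) auto
  finally show ?thesis using finite_subset[OF sub finite_imageI[OF fin]] by simp
qed

lemma Phi_surj: fixes B :: "'F list" assumes "is_basis q m B" shows "Phi B ` UNIV = Xset"
proof -
  have sub: "Phi B ` UNIV \<subseteq> Xset" unfolding Xset_def Phi_def using tr_in gf_0 by auto
  have "card (Phi B ` UNIV) = q^m" using card_image[OF Phi_inj[OF assms]] card by simp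
  then show ?thesis using Xset_card sub card_mono[OF _ sub]
    by (intro card_subset_eq) auto
qed

lemma coef_lemma:
  fixes B B' :: "'F list"
  assumes "is_dual q m B B'" "\<forall>i<m. d i \<in> GF" "k < m"
  shows "Tr (B!k * (\<Sum>i<m. d i * B'!i)) = d k"
proof -
  have "Tr (B!k * (\<Sum>i<m. d i * B'!i)) = Tr (\<Sum>i<m. d i * (B!k * B'!i))"
    by (simp add: sum_distrib_left mult_ac)
  also have "\<dots> = (\<Sum>i<m. d i * Tr (B!k * B'!i))" using assms(2) by (simp add: tr_lincomb)
  also have "\<dots> = (\<Sum>i<m. d i * (if k = i then 1 else 0))"
    using assms(1,3) unfolding is_dual_def by (intro sum.cong) auto
  also have "\<dots> = d k" using assms(3) by (simp add: if_distrib cong: if_cong)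
  finally show ?thesis .
qed

lemma dual_ex1:
  fixes B :: "'F list"
  assumes B: "is_basis q m B"
  shows "\<exists>!B'. is_basis q m B' \<and> is_dual q m B B'"
proof -
  define e where "e = (\<lambda>j::nat. \<lambda>i::nat. if i = j then (1::'F) else 0)"
  have eX: "j < m \<Longrightarrow> e j \<in> Xset" for j unfolding e_def Xset_def using gf_0 gf_1 by auto
  have ex: "j < m \<Longrightarrow> \<exists>z. Phi B z = e j" for j using Phi_surj[OF B] eX by (metis UNIV_I imageE)
  define B' where "B' = map (\<lambda>j. SOME z. Phi B z = e j) [0..<m]"
  have PB': "Phi B (B'!j) = e j" if j: "j < m" for j
  proof -
    have "Phi B (SOME z. Phi B z = e j) = e j" by (rule someI_ex[OF ex[OF j]])
    then show ?thesis unfolding B'_def using j by simp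
  qed
  have dual: "is_dual q m B B'"
    unfolding is_dual_def
  proof (intro conjI allI impI)
    show "length B' = m" by (simp add: B'_def)
    fix i j assume "i < m" "j < m"
    then show "Tr (B ! i * B' ! j) = (if i = j then 1 else 0)"
      using fun_cong[OF PB'[of j], of i] by (simp add: Phi_def e_def)
  qed
  have basis: "is_basis q m B'"
    unfolding is_basis_def
  proof (intro conjI allI)
    show "length B' = m" by (simp add: B'_def)
    fix x :: 'F
    have cX: "Phi B x \<in> Xset" using Phi_surj[OF B] by blast
    have uniq: "d = Phi B x" if d: "\<forall>i<m. d i \<in> GF" "\<forall>i\<ge>m. d i = 0" "x = (\<Sum>i<m. d i * B' ! i)" for d
    proof
      fix k show "d k = Phi B x k"
        using coef_lemma[OF dual d(1), of k] d(2,3) by (cases "k < m") (auto simp: Phi_def)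
    qed
    have repr: "x = (\<Sum>i<m. Phi B x i * B' ! i)"
    proof (rule injD[OF Phi_inj[OF B]])
      show "Phi B x = Phi B (\<Sum>i<m. Phi B x i * B' ! i)"
      proof
        fix k show "Phi B x k = Phi B (\<Sum>i<m. Phi B x i * B' ! i) k"
          using coef_lemma[OF dual, of "Phi B x" k] cX by (cases "k < m") (auto simp: Phi_def Xset_def)
      qed
    qed
    show "\<exists>!c. (\<forall>i<m. c i \<in> GF) \<and> (\<forall>i\<ge>m. c i = 0) \<and> x = (\<Sum>i<m. c i * B' ! i)"
    proof (rule ex1I[of _ "Phi B x"])
      show "(\<forall>i<m. Phi B x i \<in> GF) \<and> (\<forall>i\<ge>m. Phi B x i = 0) \<and> x = (\<Sum>i<m. Phi B x i * B' ! i)"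
        using cX repr unfolding Xset_def by simp
    qed (use uniq in simp)
  qed
  show ?thesis
  proof (rule ex1I[of _ B'])
    show "is_basis q m B' \<and> is_dual q m B B'" using basis dual by blast
    fix B'' assume H: "is_basis q m B'' \<and> is_dual q m B B''"
    show "B'' = B'"
    proof (rule nth_equalityI)
      show "length B'' = length B'" using H dual unfolding is_dual_def by simp
      fix j assume "j < length B''"
      then have j: "j < m" using H unfolding is_dual_def by simp
      have "Phi B (B''!j) = e j"
        using H j unfolding is_dual_def Phi_def e_def by auto
      then show "B'' ! j = B' ! j" using PB'[OF j] injD[OF Phi_inj[OF B]] by metis
    qed
  qed
qed

lemma dual_basis_len: fixes B :: "'F list" shows "is_basis q m B \<Longrightarrow> length (dual_basis q m B) = m"
  unfolding dual_basis_def using theI'[OF dual_ex1] is_dual_def by metis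

lemma dual_unique:
  fixes B D1 D2 :: "'F list"
  assumes B: "is_basis q m B" and d1: "is_dual q m B D1" and d2: "is_dual q m B D2"
  shows "D1 = D2"
proof (rule nth_equalityI)
  show "length D1 = length D2" using d1 d2 unfolding is_dual_def by simp
  fix j assume "j < length D1"
  then have j: "j < m" using d1 unfolding is_dual_def by simp
  have "Phi B (D1!j) = Phi B (D2!j)"
    using d1 d2 j unfolding is_dual_def Phi_def by auto
  then show "D1 ! j = D2 ! j" using injD[OF Phi_inj[OF B]] by metis
qed

lemma dual_basis_eq:
  fixes B D :: "'F list"
  assumes B: "is_basis q m B" and d: "is_dual q m B D"
  shows "dual_basis q m B = D"
proof -
  have "is_dual q m B (dual_basis q m B)"
    unfolding dual_basis_def using theI'[OF dual_ex1[OF B]] by blast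
  then show ?thesis using dual_unique[OF B _ d] by blast
qed

end


lemma key_lemma:
  fixes K :: "'F::field \<Rightarrow> 'F \<Rightarrow> 'F"
  assumes addL: "\<And>a a' b. K (a+a') b = K a b + K a' b"
      and addR: "\<And>a b b'. K a (b+b') = K a b + K a b'"
      and i2: "\<And>l w. K (l*ub) (w*ub) = K (l*ua) (w*ua)"
      and i3: "\<And>l w. K (l*uc) (w*uc) = K (l*ua) (w*ua)"
      and i5: "\<And>l w. K (l*ud) (w*ud) = K (l*ua) (w*ua)"
      and ud: "ud = ub + uc - ua"
      and nz: "ua \<noteq> 0" "ub \<noteq> 0" "uc \<noteq> 0" "ud \<noteq> 0" "ub \<noteq> ua" "uc \<noteq> ua" "ub + uc \<noteq> 0"
  shows "K a b = 0"
proof -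
  have subL: "K (a - a') b = K a b - K a' b" for a a' b
    using addL[of "a - a'" a' b] by (simp add: algebra_simps)
  have subR: "K a (b - b') = K a b - K a b'" for a b b'
    using addR[of a "b - b'" b'] by (simp add: algebra_simps)
  have conv: "K (l*u) w = K (l*ua) ((w/u)*ua)"
    if iu: "\<And>l w. K (l*u) (w*u) = K (l*ua) (w*ua)" and "u \<noteq> 0" for l w u
  proof -
    have "K (l*u) w = K (l*u) ((w/u)*u)" using \<open>u \<noteq> 0\<close> by simp
    also have "\<dots> = K (l*ua) ((w/u)*ua)" by (rule iu)
    finally show ?thesis .
  qed
  define E where "E = ua/ub + ua/uc - ua/ud"
  define c where "c = 1 - E"
  have main: "K (l*ua) (w*c) = 0" for l w
  proof -
    have "l*ua = l*ub + l*uc - l*ud" unfolding ud by (simp add: algebra_simps)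
    then have "K (l*ua) w = K (l*ub) w + K (l*uc) w - K (l*ud) w"
      by (simp add: subL addL)
    also have "\<dots> = K (l*ua) ((w/ub)*ua) + K (l*ua) ((w/uc)*ua) - K (l*ua) ((w/ud)*ua)"
      using conv[OF i2 nz(2)] conv[OF i3 nz(3)] conv[OF i5 nz(4)] by simp
    also have "\<dots> = K (l*ua) ((w/ub)*ua + (w/uc)*ua - (w/ud)*ua)"
      by (simp add: subR addR)
    also have "(w/ub)*ua + (w/uc)*ua - (w/ud)*ua = w * E" unfolding E_def by (simp add: algebra_simps)
    finally have "K (l*ua) w - K (l*ua) (w*E) = 0" by simp
    then have "K (l*ua) (w - w*E) = 0" by (simp add: subR)
    moreover have "w - w*E = w*c" unfolding c_def by (simp add: algebra_simps)
    ultimately show ?thesis by simp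
  qed
  have "c \<noteq> 0"
  proof
    assume "c = 0"
    then have H: "ua/ub + ua/uc - ua/ud = 1" unfolding c_def E_def by simp
    have "ub*uc*ud*(ua/ub + ua/uc - ua/ud) = ua*uc*ud + ua*ub*ud - ua*ub*uc"
      using nz by (simp add: field_simps)
    then have "ua*uc*ud + ua*ub*ud - ua*ub*uc = ub*uc*ud" using H by simp
    then have "(ub+uc)*(ub-ua)*(uc-ua) = 0" unfolding ud by (simp add: algebra_simps)
    then show False using nz by simp
  qed
  have "K ((a/ua)*ua) ((b/c)*c) = 0" by (rule main)
  then show ?thesis using nz \<open>c \<noteq> 0\<close> by simp
qed

lemma concat_block:
  assumes "length x = n" "i < length D"
  shows "take n (drop (i*n) (concat (map (\<lambda>b. map (h b) x) D))) = map (h (D!i)) x"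
  using assms(2)
proof (induction D arbitrary: i)
  case (Cons d D)
  show ?case
  proof (cases i)
    case 0 then show ?thesis using assms(1) by simp
  next
    case (Suc j)
    then have "j < length D" using Cons by simp
    then show ?thesis using Suc Cons.IH assms(1) by (simp add: drop_append add.commute)
  qed
qed simp

lemma map2_maps: "map2 g (map h1 xs) (map h2 xs) = map (\<lambda>x. g (h1 x) (h2 x)) xs"
  by (induct xs) auto

lemma sum_update0:
  fixes g :: "'b \<Rightarrow> 'a::ab_group_add"
  assumes "m > 0" "length D = m"
  shows "(\<Sum>i<m. g (D[0:=u]!i)) = g u + (\<Sum>i<m. g (D!i)) - g (D!0)"
proof -
  have A: "(\<Sum>i<m. h i) = h 0 + (\<Sum>i\<in>{..<m}-{0}. h i)" for h :: "nat \<Rightarrow> 'a"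
    using assms(1) by (subst sum.remove[of _ 0]) auto
  have "(\<Sum>i\<in>{..<m}-{0}. g (D[0:=u]!i)) = (\<Sum>i\<in>{..<m}-{0}. g (D!i))"
    by (intro sum.cong) auto
  then show ?thesis using A[of "\<lambda>i. g (D[0:=u]!i)"] A[of "\<lambda>i. g (D!i)"] assms by simp
qed



theorem theorem5:
  fixes C :: "'F::{finite,field} list set"
    and f :: "'F list \<Rightarrow> 'F list \<Rightarrow> 'F"
    and q m n :: nat
    and \<beta> B1 B2 B3 B4 B5 :: "'F list"
    and \<alpha> \<gamma> \<delta> :: 'F
  assumes q: "prime_power q"
    and card: "card (UNIV :: 'F set) = q ^ m"
    and m: "m > 2" and n: "n \<ge> 1"
    and C_len: "\<forall>x\<in>C. length x = n"
    and C_scal: "scalable C"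
    and f_biadd: "biadditive n f"
    and \<alpha>: "\<alpha> \<in> subfield_GF q" "\<alpha> \<noteq> 0"
    and \<gamma>: "\<gamma> \<in> subfield_GF q" "\<gamma> \<noteq> 0"
    and \<delta>: "\<delta> \<in> subfield_GF q" "\<delta> \<noteq> 0"
    and B1: "is_basis q m B1" "is_dual q m B1 \<beta>"
    and B2: "is_basis q m B2" "is_dual q m B2 (\<beta>[0 := \<beta> ! 0 + \<alpha> * \<beta> ! 1])"
    and B3: "is_basis q m B3" "is_dual q m B3 (\<beta>[0 := \<beta> ! 0 + \<gamma> * \<beta> ! 2])"
    and B4: "is_basis q m B4" "is_dual q m B4 (\<beta>[1 := \<beta> ! 1 + \<delta> * \<beta> ! 2])"
    and B5: "is_basis q m B5"
            "is_dual q m B5 (\<beta>[0 := \<beta> ! 0 + \<alpha> * \<beta> ! 1 + \<gamma> * \<beta> ! 2])"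
    and so: "self_orthogonal (induced_form m n f) (im_basis q m B1 C)"
            "self_orthogonal (induced_form m n f) (im_basis q m B2 C)"
            "self_orthogonal (induced_form m n f) (im_basis q m B3 C)"
            "self_orthogonal (induced_form m n f) (im_basis q m B4 C)"
            "self_orthogonal (induced_form m n f) (im_basis q m B5 C)"
  shows "self_orthogonal f (trace_code q m C) \<and>
         (\<forall>B. is_basis q m B \<longrightarrow> self_orthogonal (induced_form m n f) (im_basis q m B C))"
proof -
  have m2: "m > 2" by (rule m)
  interpret ffq q m "TYPE('F)" using q card m by unfold_locales auto
  define T where "T = (\<lambda>(x::'F list) a. map (\<lambda>xj. Tr (a*xj)) x)"
  define K where "K = (\<lambda>x y a b. f (T x a) (T y b))"
  have lenT: "length (T x a) = length x" for x a by (simp add: T_def)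
  have Tadd: "T x (a+a') = map2 (+) (T x a) (T x a')" for x a a'
    by (simp add: T_def map2_maps distrib_right tr_add)
  have fb: "f (map2 (+) u v) w = f u w + f v w" "f u (map2 (+) v w) = f u v + f u w"
    if "length u = n" "length v = n" "length w = n" for u v w
    using f_biadd that unfolding biadditive_def by blast+
  have KaddL: "K x y (a+a') b = K x y a b + K x y a' b" if "x \<in> C" "y \<in> C" for x y a a' b
    unfolding K_def Tadd using fb(1) lenT C_len that by simp
  have KaddR: "K x y a (b+b') = K x y a b + K x y a b'" if "x \<in> C" "y \<in> C" for x y a b b'
    unfolding K_def Tadd using fb(2) lenT C_len that by simp
  have Tscale: "T (map (\<lambda>xi. l*xi) x) a = T x (l*a)" for l x a
    by (simp add: T_def mult_ac)
  have scal: "map (\<lambda>xi. l*xi) x \<in> C" if "x \<in> C" for l x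
    using C_scal that unfolding scalable_def by blast
  have indf: "induced_form m n f (concat (map (\<lambda>b. map (\<lambda>xj. Tr (b*xj)) x) D))
                  (concat (map (\<lambda>b. map (\<lambda>xj. Tr (b*xj)) y) D))
              = (\<Sum>i<m. f (T x (D!i)) (T y (D!i)))"
    if "length D = m" "length x = n" "length y = n" for D x y
    unfolding induced_form_def
    by (intro sum.cong refl) (use that in \<open>simp add: concat_block T_def\<close>)
  have sumK: "(\<Sum>i<m. K x y (l * D!i) (w * D!i)) = 0"
    if Bk: "is_basis q m Bk" "is_dual q m Bk D"
      and sok: "self_orthogonal (induced_form m n f) (im_basis q m Bk C)"
      and xy: "x \<in> C" "y \<in> C" for Bk D x y l w
  proof -
    have imb: "im_basis q m Bk C = im_dual q m D C"
      unfolding im_basis_def using dual_basis_eq[OF Bk] by simp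
    have lenD: "length D = m" using Bk(2) unfolding is_dual_def by simp
    define x' where "x' = map (\<lambda>xi. l*xi) x"
    define y' where "y' = map (\<lambda>xi. w*xi) y"
    have x'C: "x' \<in> C" and y'C: "y' \<in> C" unfolding x'_def y'_def using scal xy by auto
    have "induced_form m n f (concat (map (\<lambda>b. map (\<lambda>xj. Tr (b*xj)) x') D))
                  (concat (map (\<lambda>b. map (\<lambda>xj. Tr (b*xj)) y') D)) = 0"
      using sok x'C y'C unfolding imb self_orthogonal_def im_dual_def by blast
    then have "(\<Sum>i<m. f (T x' (D!i)) (T y' (D!i))) = 0"
      using indf[OF lenD] C_len x'C y'C by simp
    then show ?thesis unfolding K_def x'_def y'_def Tscale .
  qed
  have lenb: "length \<beta> = m" using B1(2) unfolding is_dual_def by simp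
  have inv: "K x y (l * u) (w * u) = K x y (l * \<beta>!0) (w * \<beta>!0)"
    if Bk: "is_basis q m Bk" "is_dual q m Bk (\<beta>[0 := u])"
      and sok: "self_orthogonal (induced_form m n f) (im_basis q m Bk C)"
      and xy: "x \<in> C" "y \<in> C" for Bk u x y l w
  proof -
    have s1: "(\<Sum>i<m. K x y (l * \<beta>!i) (w * \<beta>!i)) = 0" by (rule sumK[OF B1 so(1) xy])
    have s2: "(\<Sum>i<m. K x y (l * (\<beta>[0:=u])!i) (w * (\<beta>[0:=u])!i)) = 0" by (rule sumK[OF Bk sok xy])
    have "(\<Sum>i<m. K x y (l * (\<beta>[0:=u])!i) (w * (\<beta>[0:=u])!i))
        = K x y (l * u) (w * u) + (\<Sum>i<m. K x y (l * \<beta>!i) (w * \<beta>!i)) - K x y (l * \<beta>!0) (w * \<beta>!0)"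
      using sum_update0[of m \<beta> "\<lambda>d. K x y (l*d) (w*d)" u] m2 lenb by simp
    then show ?thesis using s1 s2 by simp
  qed
  have dual_nz: "D ! i \<noteq> 0" if "is_dual q m Bk D" "i < m" for Bk D :: "'F list" and i
  proof
    assume "D ! i = 0"
    then have "Tr (Bk ! i * D ! i) = 0" by (simp add: tr_zero)
    then show False using that unfolding is_dual_def by auto
  qed
  define u1 where "u1 = \<beta>!0"
  define u2 where "u2 = \<beta> ! 0 + \<alpha> * \<beta> ! 1"
  define u3 where "u3 = \<beta> ! 0 + \<gamma> * \<beta> ! 2"
  define u5 where "u5 = \<beta> ! 0 + \<alpha> * \<beta> ! 1 + \<gamma> * \<beta> ! 2"
  have nz1: "u1 \<noteq> 0" unfolding u1_def using dual_nz[OF B1(2)] m2 by simp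
  have nz2: "u2 \<noteq> 0" using dual_nz[OF B2(2), of 0] m2 lenb unfolding u2_def by simp
  have nz3: "u3 \<noteq> 0" using dual_nz[OF B3(2), of 0] m2 lenb unfolding u3_def by simp
  have nz5: "u5 \<noteq> 0" using dual_nz[OF B5(2), of 0] m2 lenb unfolding u5_def by simp
  have nz21: "u2 \<noteq> u1" using dual_nz[OF B1(2), of 1] m2 \<alpha>(2) unfolding u1_def u2_def by simp
  have nz31: "u3 \<noteq> u1" using dual_nz[OF B1(2), of 2] m2 \<gamma>(2) unfolding u1_def u3_def by simp
  have nz23: "u2 + u3 \<noteq> 0"
  proof
    assume H: "u2 + u3 = 0"
    have d: "Tr (B1!2 * \<beta>!0) = 0" "Tr (B1!2 * \<beta>!1) = 0" "Tr (B1!2 * \<beta>!2) = 1"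
      using B1(2) m2 unfolding is_dual_def by auto
    define z where "z = B1!2 * \<beta>!0"
    have e: "B1!2 * (u2 + u3) = (z + z) + \<alpha> * (B1!2 * \<beta>!1) + \<gamma> * (B1!2 * \<beta>!2)"
      unfolding u2_def u3_def z_def by (simp add: algebra_simps)
    have "Tr (B1!2 * (u2 + u3)) = (Tr z + Tr z) + Tr (\<alpha> * (B1!2 * \<beta>!1)) + Tr (\<gamma> * (B1!2 * \<beta>!2))"
      by (simp only: e tr_add)
    also have "\<dots> = \<gamma>" using d \<alpha>(1) \<gamma>(1) unfolding z_def by (simp add: tr_scal)
    finally have "Tr (B1!2 * (u2 + u3)) = \<gamma>" .
    then show False using H \<gamma>(2) by (simp add: tr_zero)
  qed
  have K0: "K x y a b = 0" if xy: "x \<in> C" "y \<in> C" for x y a b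
  proof (rule key_lemma[where K = "K x y" and ua = u1 and ub = u2 and uc = u3 and ud = u5])
    show "K x y (l * u2) (w * u2) = K x y (l * u1) (w * u1)" for l w
      unfolding u1_def u2_def by (rule inv[OF B2 so(2) xy])
    show "K x y (l * u3) (w * u3) = K x y (l * u1) (w * u1)" for l w
      unfolding u1_def u3_def by (rule inv[OF B3 so(3) xy])
    show "K x y (l * u5) (w * u5) = K x y (l * u1) (w * u1)" for l w
      unfolding u1_def u5_def by (rule inv[OF B5 so(5) xy])
    show "u5 = u2 + u3 - u1" unfolding u1_def u2_def u3_def u5_def by (simp add: algebra_simps)
  qed (use KaddL KaddR xy nz1 nz2 nz3 nz5 nz21 nz31 nz23 in auto)
  show ?thesis
  proof
    show "self_orthogonal f (trace_code q m C)"
      unfolding self_orthogonal_def trace_code_def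
    proof (intro ballI)
      fix X Y assume "X \<in> map Tr ` C" "Y \<in> map Tr ` C"
      then obtain x y where "x \<in> C" "y \<in> C" "X = map Tr x" "Y = map Tr y" by blast
      moreover have "map Tr x = T x 1" "map Tr y = T y 1" by (simp_all add: T_def)
      ultimately show "f X Y = 0" using K0[of x y 1 1] unfolding K_def by simp
    qed
    show "\<forall>B. is_basis q m B \<longrightarrow> self_orthogonal (induced_form m n f) (im_basis q m B C)"
    proof (intro allI impI)
      fix B :: "'F list" assume B: "is_basis q m B"
      define D where "D = dual_basis q m B"
      have lenD: "length D = m" unfolding D_def by (rule dual_basis_len[OF B])
      show "self_orthogonal (induced_form m n f) (im_basis q m B C)"
        unfolding self_orthogonal_def im_basis_def im_dual_def D_def[symmetric]
      proof (intro ballI)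
        fix X Y assume "X \<in> (\<lambda>x. concat (map (\<lambda>b. map (\<lambda>xj. Tr (b * xj)) x) D)) ` C"
          "Y \<in> (\<lambda>x. concat (map (\<lambda>b. map (\<lambda>xj. Tr (b * xj)) x) D)) ` C"
        then obtain x y where xy: "x \<in> C" "y \<in> C"
          "X = concat (map (\<lambda>b. map (\<lambda>xj. Tr (b * xj)) x) D)"
          "Y = concat (map (\<lambda>b. map (\<lambda>xj. Tr (b * xj)) y) D)" by blast
        have "induced_form m n f X Y = (\<Sum>i<m. f (T x (D!i)) (T y (D!i)))"
          unfolding xy(3,4) using indf[OF lenD] C_len xy(1,2) by simp
        also have "\<dots> = 0" using K0[OF xy(1,2)] unfolding K_def by simp
        finally show "induced_form m n f X Y = 0" .
      qed
    qed
  qed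
qed

end
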